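(* Let $T$ be a tree, $f_1,f_2$ proper 3-colorings of $T$, and $h\in D(f_1,f_2)$. Then there is a walk from $f_1$ to $f_2$ in $\mathcal{C}_3(T)$ of length $\|h\|_1$ in which each vertex $w$ is toggled exactly $|h(w)|$ times, every such toggle changing the color of $w$ by $\operatorname{sign}(h(w))\in\{+1,-1\}$ (in $\mathbb{Z}/3\mathbb{Z}$). In particular the walk contains no two steps that toggle the same vertex in opposite directions.
   Context: Let $T$ be a finite tree with vertex set $V$ and edge set $E$. A proper 3-coloring of $T$ is a map $f\colon V\to\mathbb{Z}/3\mathbb{Z}$ with $f(u)\neq f(v)$ for every edge $uv\in E$. The 3-coloring graph $\mathcal{C}_3(T)$ has the proper 3-colorings as vertices, two colorings adjacent iff they differ at exactly one vertex; a step of a walk changing the color of $w$ by $\pm1$ is a $(\pm1)$-toggle at $w$. A labeling of $T$ is a map $h\colon V\to\mathbb{Z}$ with $|h(u)-h(v)|\le 1$ for every edge $uv\in E$, and $\|h\|_1=\sum_{v\in V}|h(v)|$. Given proper 3-colorings $f,g$, $D(f,g)$ is the set of labelings $h$ with $h(v)\equiv g(v)-f(v)\pmod 3$ for all $v\in V$. *)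

theory Defs
  imports Main
begin

definition simple_graph :: "'a set \<Rightarrow> ('a \<times> 'a) set \<Rightarrow> bool" where
  "simple_graph V E \<longleftrightarrow> E \<subseteq> V \<times> V \<and> sym E \<and> irrefl E"

definition is_cycle :: "('a \<times> 'a) set \<Rightarrow> 'a list \<Rightarrow> bool" where
  "is_cycle E cs \<longleftrightarrow> length cs \<ge> 3 \<and> distinct cs
     \<and> (\<forall>i. Suc i < length cs \<longrightarrow> (cs ! i, cs ! Suc i) \<in> E)
     \<and> (last cs, hd cs) \<in> E"

definition is_tree :: "'a set \<Rightarrow> ('a \<times> 'a) set \<Rightarrow> bool" where
  "is_tree V E \<longleftrightarrow> simple_graph V E \<and> finite V \<and> V \<noteq> {}
     \<and> (\<forall>u\<in>V. \<forall>v\<in>V. (u, v) \<in> E\<^sup>*)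
     \<and> \<not> (\<exists>cs. is_cycle E cs)"

(* Colours in Z/3Z are represented by the integers 0,1,2 with arithmetic mod 3.
   A colouring is a function on V, extended by 0 outside V so that colourings
   are determined by their values on V. *)
definition proper3 :: "'a set \<Rightarrow> ('a \<times> 'a) set \<Rightarrow> ('a \<Rightarrow> int) \<Rightarrow> bool" where
  "proper3 V E f \<longleftrightarrow> (\<forall>v\<in>V. f v \<in> {0, 1, 2}) \<and> (\<forall>v. v \<notin> V \<longrightarrow> f v = 0)
     \<and> (\<forall>(u, v)\<in>E. f u \<noteq> f v)"

definition col_adj :: "'a set \<Rightarrow> ('a \<Rightarrow> int) \<Rightarrow> ('a \<Rightarrow> int) \<Rightarrow> bool" where
  "col_adj V f g \<longleftrightarrow> (\<exists>!w. w \<in> V \<and> f w \<noteq> g w)"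

definition col_walk :: "'a set \<Rightarrow> ('a \<times> 'a) set \<Rightarrow> ('a \<Rightarrow> int) list \<Rightarrow> bool" where
  "col_walk V E cs \<longleftrightarrow> cs \<noteq> [] \<and> (\<forall>c\<in>set cs. proper3 V E c)
     \<and> (\<forall>i. Suc i < length cs \<longrightarrow> col_adj V (cs ! i) (cs ! Suc i))"

definition labeling :: "'a set \<Rightarrow> ('a \<times> 'a) set \<Rightarrow> ('a \<Rightarrow> int) \<Rightarrow> bool" where
  "labeling V E h \<longleftrightarrow> (\<forall>(u, v)\<in>E. \<bar>h u - h v\<bar> \<le> 1)"

definition norm1 :: "'a set \<Rightarrow> ('a \<Rightarrow> int) \<Rightarrow> int" where
  "norm1 V h = (\<Sum>v\<in>V. \<bar>h v\<bar>)"

definition Dset :: "'a set \<Rightarrow> ('a \<times> 'a) set \<Rightarrow> ('a \<Rightarrow> int) \<Rightarrow> ('a \<Rightarrow> int) \<Rightarrow> ('a \<Rightarrow> int) set" where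
  "Dset V E f g = {h. labeling V E h \<and> (\<forall>v\<in>V. h v mod 3 = (g v - f v) mod 3)}"

end

theory Submission
  imports Defs
begin

lemma arith_block:
  fixes a b c d x y :: int
  assumes "a \<in> {0,1,2}" "b \<in> {0,1,2}" "c \<in> {0,1,2}" "d \<in> {0,1,2}" "c \<noteq> d"
    "x mod 3 = (c - a) mod 3" "y mod 3 = (d - b) mod 3" "\<bar>x - y\<bar> \<le> 1" "\<bar>y\<bar> \<le> \<bar>x\<bar>" "x \<noteq> 0"
    "b = (a + sgn x) mod 3"
  shows "y = x"
proof (rule ccontr)
  assume ne: "y \<noteq> x"
  define s where "s = sgn x"
  have s: "s = 1 \<or> s = -1" using assms(10) by (auto simp: s_def sgn_if)
  have yx: "y = x - s" using assms(8,9,10) ne by (cases "x > 0") (auto simp: s_def sgn_if)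
  have "(x - s) mod 3 = (d - b) mod 3" using yx assms(7) by simp
  then have 1: "3 dvd (x - s) - (d - b)" by (simp add: mod_eq_dvd_iff)
  have 2: "3 dvd x - (c - a)" using assms(6) by (simp add: mod_eq_dvd_iff)
  have "b mod 3 = (a + s) mod 3" using assms(11) s_def by simp
  then have 3: "3 dvd b - (a + s)" by (simp add: mod_eq_dvd_iff)
  have "d - c = ((x - (c - a)) - ((x - s) - (d - b))) + (b - (a + s))" by simp
  then have "3 dvd d - c" using 1 2 3 by (metis dvd_diff dvd_add)
  then have "(c - d) mod 3 = 0" by (metis dvd_minus_iff minus_diff_eq dvd_eq_mod_eq_0)
  then show False using assms(3,4,5) by auto
qed

lemma arith_lab:
  fixes x y s :: int
  assumes "\<bar>x - y\<bar> \<le> 1" "\<bar>y\<bar> \<le> \<bar>x\<bar>" "s = sgn x" "x \<noteq> 0"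
  shows "\<bar>x - s - y\<bar> \<le> 1"
  using assms by (cases "x > 0") (auto simp: sgn_if)

lemma arith_two:
  fixes a s :: int
  assumes "a \<in> {0,1,2}" "s \<in> {1,-1}"
  shows "((a + s) mod 3 + s) mod 3 \<noteq> a" and "(a + s) mod 3 \<noteq> a"
  using assms by auto

lemma exists_free:
  assumes tree: "is_tree V E" and p1: "proper3 V E f1" and p2: "proper3 V E f2"
    and hD: "h \<in> Dset V E f1 f2" and w0: "w0 \<in> V" "h w0 = m" and m0: "m \<noteq> 0"
    and mx: "\<forall>v\<in>V. \<bar>h v\<bar> \<le> \<bar>m\<bar>"
  shows "\<exists>w\<in>V. h w = m \<and> (\<forall>u. (w, u) \<in> E \<longrightarrow> f1 u \<noteq> (f1 w + sgn m) mod 3)"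
proof (rule ccontr)
  assume nf: "\<not> ?thesis"
  define s where "s = sgn m"
  have EV: "E \<subseteq> V \<times> V" and sy: "sym E" and ir: "irrefl E" and finV: "finite V"
    using tree by (auto simp: is_tree_def simple_graph_def)
  have blk: "\<exists>u. (w, u) \<in> E \<and> f1 u = (f1 w + s) mod 3 \<and> u \<in> V \<and> h u = m"
    if wh: "w \<in> V" "h w = m" for w
  proof -
    obtain u where u: "(w, u) \<in> E" "f1 u = (f1 w + s) mod 3"
      using nf wh s_def by auto
    have uV: "u \<in> V" using u EV by auto
    have "h u = h w"
    proof (rule arith_block[of "f1 w" "f1 u" "f2 w" "f2 u"])
      show "f1 w \<in> {0,1,2}" "f1 u \<in> {0,1,2}" using p1 uV wh by (auto simp: proper3_def)
      show "f2 w \<in> {0,1,2}" "f2 u \<in> {0,1,2}" using p2 uV wh by (auto simp: proper3_def)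
      show "f2 w \<noteq> f2 u" using p2 u by (auto simp: proper3_def)
      show "h w mod 3 = (f2 w - f1 w) mod 3" "h u mod 3 = (f2 u - f1 u) mod 3"
        using hD uV wh by (auto simp: Dset_def)
      show "\<bar>h w - h u\<bar> \<le> 1" using hD u by (auto simp: Dset_def labeling_def)
      show "\<bar>h u\<bar> \<le> \<bar>h w\<bar>" using mx uV wh by auto
      show "h w \<noteq> 0" using wh m0 by simp
      show "f1 u = (f1 w + sgn (h w)) mod 3" using u wh s_def by simp
    qed
    then show ?thesis using u uV wh by auto
  qed
  define nxt where "nxt w = (SOME u. (w, u) \<in> E \<and> f1 u = (f1 w + s) mod 3 \<and> u \<in> V \<and> h u = m)" for w
  have nxt: "(w, nxt w) \<in> E \<and> f1 (nxt w) = (f1 w + s) mod 3 \<and> nxt w \<in> V \<and> h (nxt w) = m"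
    if "w \<in> V" "h w = m" for w
    unfolding nxt_def by (rule someI_ex) (rule blk[OF that])
  define sq where "sq i = (nxt ^^ i) w0" for i
  have sqS: "\<And>i. sq i \<in> V \<and> h (sq i) = m"
  proof -
    fix i show "sq i \<in> V \<and> h (sq i) = m"
      by (induction i) (auto simp: sq_def w0 nxt)
  qed
  have sqE: "(sq i, sq (Suc i)) \<in> E" and sqc: "f1 (sq (Suc i)) = (f1 (sq i) + s) mod 3" for i
    using nxt[of "sq i"] sqS[of i] by (auto simp: sq_def)
  have "\<not> inj_on sq {..card V}"
  proof
    assume "inj_on sq {..card V}"
    then have "card (sq ` {..card V}) = Suc (card V)" by (simp add: card_image)
    moreover have "card (sq ` {..card V}) \<le> card V"
      using sqS finV by (intro card_mono) auto
    ultimately show False by simp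
  qed
  then have ex: "\<exists>j. \<exists>i<j. sq i = sq j"
    unfolding inj_on_def by (metis linorder_neqE_nat)
  define j0 where "j0 = (LEAST j. \<exists>i<j. sq i = sq j)"
  have "\<exists>i<j0. sq i = sq j0" unfolding j0_def by (rule LeastI_ex[OF ex])
  then obtain i0 where i0: "i0 < j0" "sq i0 = sq j0" by blast
  have minj: "\<not> (\<exists>i<j. sq i = sq j)" if "j < j0" for j
    using not_less_Least[of j "\<lambda>j. \<exists>i<j. sq i = sq j"] that unfolding j0_def by blast
  have s1: "s \<in> {1, -1}" using m0 by (auto simp: s_def sgn_if)
  have f1r: "f1 (sq i) \<in> {0,1,2}" for i using p1 sqS[of i] by (auto simp: proper3_def)
  have ne1: "j0 \<noteq> Suc i0"
  proof
    assume "j0 = Suc i0"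
    then have "(sq i0, sq i0) \<in> E" using sqE[of i0] i0 by simp
    then show False using ir by (auto simp: irrefl_def)
  qed
  have ne2: "j0 \<noteq> Suc (Suc i0)"
  proof
    assume "j0 = Suc (Suc i0)"
    then have "f1 (sq i0) = ((f1 (sq i0) + s) mod 3 + s) mod 3"
      using sqc[of i0] sqc[of "Suc i0"] i0 by simp
    then show False using arith_two(1)[OF f1r[of i0] s1] by simp
  qed
  define cs where "cs = map sq [i0..<j0]"
  have len: "length cs = j0 - i0" by (simp add: cs_def)
  have nth: "k < j0 - i0 \<Longrightarrow> cs ! k = sq (i0 + k)" for k by (simp add: cs_def)
  have "is_cycle E cs"
    unfolding is_cycle_def
  proof (intro conjI allI impI)
    show "3 \<le> length cs" using len i0 ne1 ne2 by linarith
    show "distinct cs" unfolding cs_def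
    proof (rule distinct_map[THEN iffD2], intro conjI)
      show "inj_on sq (set [i0..<j0])"
      proof (rule inj_onI)
        fix a b assume ab: "a \<in> set [i0..<j0]" "b \<in> set [i0..<j0]" "sq a = sq b"
        show "a = b"
        proof (rule ccontr)
          assume "a \<noteq> b"
          then consider "a < b" | "b < a" by linarith
          then show False
            by cases (use ab minj in \<open>auto; metis\<close>)+
        qed
      qed
    qed simp
    fix k assume "Suc k < length cs"
    then show "(cs ! k, cs ! Suc k) \<in> E" using nth len sqE[of "i0 + k"] by simp
  next
    have "last cs = sq (j0 - 1)" using i0 by (simp add: cs_def last_map)
    moreover have "hd cs = sq j0" using i0 by (simp add: cs_def hd_map)
    moreover have "Suc (j0 - 1) = j0" using i0 by simp
    ultimately show "(last cs, hd cs) \<in> E" using sqE[of "j0 - 1"] by simp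
  qed
  then show False using tree by (auto simp: is_tree_def)
qed

definition goodwalk :: "'a set \<Rightarrow> ('a \<times> 'a) set \<Rightarrow> ('a \<Rightarrow> int) \<Rightarrow> ('a \<Rightarrow> int) \<Rightarrow> ('a \<Rightarrow> int) \<Rightarrow> ('a \<Rightarrow> int) list \<Rightarrow> bool" where
  "goodwalk V E f1 f2 h cs \<longleftrightarrow> col_walk V E cs \<and> hd cs = f1 \<and> last cs = f2
           \<and> int (length cs - 1) = norm1 V h
           \<and> (\<forall>w\<in>V.
                card {i. Suc i < length cs \<and> (cs ! i) w \<noteq> (cs ! Suc i) w} = nat \<bar>h w\<bar>
              \<and> (\<forall>i. Suc i < length cs \<and> (cs ! i) w \<noteq> (cs ! Suc i) w
                     \<longrightarrow> (cs ! Suc i) w = ((cs ! i) w + sgn (h w)) mod 3))"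

lemma step_lemma:
  assumes gw: "goodwalk V E f1' f2 h' cs'" and p1: "proper3 V E f1" and wV: "w' \<in> V"
    and f1': "f1' = f1(w' := (f1 w' + s) mod 3)" and h': "h' = h(w' := h w' - s)"
    and s: "s \<in> {1, -1}" and sg: "sgn (h w') = s" and nrm: "norm1 V h = norm1 V h' + 1"
  shows "goodwalk V E f1 f2 h (f1 # cs')"
proof -
  have cw: "col_walk V E cs'" and hd': "hd cs' = f1'" and last': "last cs' = f2"
    and len': "int (length cs' - 1) = norm1 V h'"
    and cd': "\<And>w. w \<in> V \<Longrightarrow> card {i. Suc i < length cs' \<and> (cs' ! i) w \<noteq> (cs' ! Suc i) w} = nat \<bar>h' w\<bar>"
    and dr': "\<And>w i. w \<in> V \<Longrightarrow> Suc i < length cs' \<Longrightarrow> (cs' ! i) w \<noteq> (cs' ! Suc i) w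
                     \<Longrightarrow> (cs' ! Suc i) w = ((cs' ! i) w + sgn (h' w)) mod 3"
    using gw unfolding goodwalk_def by blast+
  have ne: "cs' \<noteq> []" using cw by (simp add: col_walk_def)
  have c0: "cs' ! 0 = f1'" using hd' ne by (simp add: hd_conv_nth)
  have f1w: "f1 w' \<in> {0,1,2}" using p1 wV by (auto simp: proper3_def)
  have chg: "f1' w' \<noteq> f1 w'" using arith_two(2)[OF f1w s] f1' by simp
  have diff: "f1 w \<noteq> f1' w \<longleftrightarrow> w = w'" for w using chg f1' by auto
  have adj0: "col_adj V f1 f1'"
    unfolding col_adj_def using diff wV by (intro ex1I[of _ w']) auto
  have cwalk: "col_walk V E (f1 # cs')"
    unfolding col_walk_def
  proof (intro conjI allI impI)
    show "\<forall>c\<in>set (f1 # cs'). proper3 V E c" using cw p1 by (simp add: col_walk_def)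
    fix i assume i: "Suc i < length (f1 # cs')"
    show "col_adj V ((f1 # cs') ! i) ((f1 # cs') ! Suc i)"
    proof (cases i)
      case 0 then show ?thesis using adj0 c0 by simp
    next
      case (Suc k) then show ?thesis using cw i by (simp add: col_walk_def)
    qed
  qed simp
  have lenok: "int (length (f1 # cs') - 1) = norm1 V h"
    using len' nrm ne by (cases cs') auto
  have hw: "\<bar>h w'\<bar> \<ge> 1" "h' w' = h w' - s" using sg s h' by (auto simp: sgn_if split: if_splits)
  have rest: "card {i. Suc i < length (f1 # cs') \<and> ((f1 # cs') ! i) w \<noteq> ((f1 # cs') ! Suc i) w} = nat \<bar>h w\<bar>
      \<and> (\<forall>i. Suc i < length (f1 # cs') \<and> ((f1 # cs') ! i) w \<noteq> ((f1 # cs') ! Suc i) w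
                     \<longrightarrow> ((f1 # cs') ! Suc i) w = (((f1 # cs') ! i) w + sgn (h w)) mod 3)"
    if w: "w \<in> V" for w
  proof -
    define B where "B = {i. Suc i < length cs' \<and> (cs' ! i) w \<noteq> (cs' ! Suc i) w}"
    have finB: "finite B" unfolding B_def by (rule finite_subset[of _ "{..<length cs'}"]) auto
    have Aeq: "{i. Suc i < length (f1 # cs') \<and> ((f1 # cs') ! i) w \<noteq> ((f1 # cs') ! Suc i) w}
        = {i. i = 0 \<and> w = w'} \<union> Suc ` B"
    proof (rule set_eqI)
      fix i show "i \<in> {i. Suc i < length (f1 # cs') \<and> ((f1 # cs') ! i) w \<noteq> ((f1 # cs') ! Suc i) w}
        \<longleftrightarrow> i \<in> {i. i = 0 \<and> w = w'} \<union> Suc ` B"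
        using ne c0 diff[of w] by (cases i) (auto simp: B_def)
    qed
    have cardA: "card ({i. i = 0 \<and> w = w'} \<union> Suc ` B) = (if w = w' then 1 else 0) + card B"
      using finB by (subst card_Un_disjoint) (auto simp: card_image)
    have cB: "card B = nat \<bar>h' w\<bar>" using cd'[OF w] B_def by simp
    show ?thesis
    proof (intro conjI allI impI)
      show "card {i. Suc i < length (f1 # cs') \<and> ((f1 # cs') ! i) w \<noteq> ((f1 # cs') ! Suc i) w} = nat \<bar>h w\<bar>"
        unfolding Aeq cardA cB using hw sg s h' by (auto simp: sgn_if split: if_splits)
      fix i assume i: "Suc i < length (f1 # cs') \<and> ((f1 # cs') ! i) w \<noteq> ((f1 # cs') ! Suc i) w"
      show "((f1 # cs') ! Suc i) w = (((f1 # cs') ! i) w + sgn (h w)) mod 3"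
      proof (cases i)
        case 0
        then have "w = w'" using i c0 diff by simp
        then show ?thesis using 0 c0 f1' sg by simp
      next
        case (Suc k)
        then have kB: "k \<in> B" using i by (simp add: B_def)
        have eq: "(cs' ! Suc k) w = ((cs' ! k) w + sgn (h' w)) mod 3"
          using dr'[OF w] kB by (simp add: B_def)
        have "sgn (h' w) = sgn (h w)"
        proof (cases "w = w'")
          case True
          have "card B > 0" using kB finB by (auto simp: card_gt_0_iff)
          then have "h' w' \<noteq> 0" using cB True by simp
          then show ?thesis using True hw sg s by (auto simp: sgn_if split: if_splits)
        next
          case False then show ?thesis using h' by simp
        qed
        then show ?thesis using eq Suc by simp
      qed
    qed
  qed
  show ?thesis unfolding goodwalk_def
    using cwalk lenok rest last' ne by simp
qed

lemma base_case:
  assumes tree: "is_tree V E" and p1: "proper3 V E f1" and p2: "proper3 V E f2"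
    and hD: "h \<in> Dset V E f1 f2" and n0: "norm1 V h = 0"
  shows "goodwalk V E f1 f2 h [f1]"
proof -
  have finV: "finite V" using tree by (simp add: is_tree_def)
  have h0: "\<forall>v\<in>V. h v = 0"
    using n0 finV by (simp add: norm1_def sum_nonneg_eq_0_iff)
  have "f1 v = f2 v" for v
  proof (cases "v \<in> V")
    case True
    then have "f1 v mod 3 = f2 v mod 3" "f1 v \<in> {0,1,2}" "f2 v \<in> {0,1,2}"
      using hD h0 p1 p2 by (auto simp: Dset_def proper3_def mod_eq_dvd_iff dvd_eq_mod_eq_0 simp del: dvd_imp_mod_0)
    then show ?thesis by auto
  next
    case False then show ?thesis using p1 p2 by (simp add: proper3_def)
  qed
  then have "f1 = f2" by blast
  then show ?thesis using p1 n0 h0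
    by (simp add: goodwalk_def col_walk_def)
qed

lemma main_ind:
  assumes tree: "is_tree V E" and p2: "proper3 V E f2"
  shows "\<forall>f1 h. proper3 V E f1 \<longrightarrow> h \<in> Dset V E f1 f2 \<longrightarrow> norm1 V h = int n
           \<longrightarrow> (\<exists>cs. goodwalk V E f1 f2 h cs)"
proof (induction n)
  case 0
  then show ?case using base_case[OF tree _ p2] by auto
next
  case (Suc n)
  show ?case
  proof (intro allI impI)
    fix f1 h assume p1: "proper3 V E f1" and hD: "h \<in> Dset V E f1 f2" and nh: "norm1 V h = int (Suc n)"
    have finV: "finite V" and VE: "V \<noteq> {}" and ir: "irrefl E" and sy: "sym E" and EV: "E \<subseteq> V \<times> V"
      using tree by (auto simp: is_tree_def simple_graph_def)
    define M where "M = Max ((\<lambda>v. \<bar>h v\<bar>) ` V)"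
    have "M \<in> (\<lambda>v. \<bar>h v\<bar>) ` V" unfolding M_def using finV VE by (intro Max_in) auto
    then obtain w0 where w0: "w0 \<in> V" "\<bar>h w0\<bar> = M" by auto
    have mx: "\<forall>v\<in>V. \<bar>h v\<bar> \<le> \<bar>h w0\<bar>" using w0 finV unfolding M_def by auto
    have m0: "h w0 \<noteq> 0"
    proof
      assume "h w0 = 0"
      then have "\<forall>v\<in>V. h v = 0" using mx by auto
      then have "norm1 V h = 0" by (simp add: norm1_def)
      then show False using nh by simp
    qed
    obtain w' where w': "w' \<in> V" "h w' = h w0" and fr: "\<forall>u. (w', u) \<in> E \<longrightarrow> f1 u \<noteq> (f1 w' + sgn (h w0)) mod 3"
      using exists_free[OF tree p1 p2 hD w0(1) refl m0 mx] by blast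
    define s where "s = sgn (h w0)"
    have s: "s \<in> {1, -1}" using m0 by (auto simp: s_def sgn_if)
    have sg: "sgn (h w') = s" using w' s_def by simp
    define f1' where "f1' = f1(w' := (f1 w' + s) mod 3)"
    define h' where "h' = h(w' := h w' - s)"
    have p1': "proper3 V E f1'"
      unfolding proper3_def
    proof (intro conjI ballI allI impI)
      fix v assume "v \<in> V" then show "f1' v \<in> {0,1,2}" using p1 unfolding f1'_def proper3_def by auto
    next
      fix v assume "v \<notin> V" then show "f1' v = 0" using p1 w' unfolding f1'_def proper3_def by auto
    next
      fix x assume x: "x \<in> E"
      obtain a b where ab: "x = (a, b)" by (cases x)
      have "(b, a) \<in> E" using x ab sy by (auto simp: sym_def)
      moreover have "a \<noteq> b" using x ab ir by (auto simp: irrefl_def)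
      ultimately show "case x of (u, v) \<Rightarrow> f1' u \<noteq> f1' v"
        using x ab fr p1 unfolding f1'_def proper3_def s_def by auto
    qed
    have hD': "h' \<in> Dset V E f1' f2"
      unfolding Dset_def
    proof (intro CollectI conjI ballI)
      show "labeling V E h'" unfolding labeling_def
      proof (intro ballI)
        fix x assume x: "x \<in> E"
        obtain a b where ab: "x = (a, b)" by (cases x)
        have ba: "(b, a) \<in> E" using x ab sy by (auto simp: sym_def)
        have nab: "a \<noteq> b" using x ab ir by (auto simp: irrefl_def)
        have aV: "a \<in> V" "b \<in> V" using x ab EV by auto
        have l1: "\<bar>h a - h b\<bar> \<le> 1" using hD x ab by (auto simp: Dset_def labeling_def)
        have c1: "\<bar>h w' - s - h b\<bar> \<le> 1" if "a = w'"
          using arith_lab[of "h w'" "h b" s] l1 that mx aV w' sg s m0 by auto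
        have c2: "\<bar>h w' - s - h a\<bar> \<le> 1" if "b = w'"
          using arith_lab[of "h w'" "h a" s] l1 that mx aV w' sg s m0 by auto
        show "case x of (u, v) \<Rightarrow> \<bar>h' u - h' v\<bar> \<le> 1"
          using ab nab l1 c1 c2 unfolding h'_def by (auto simp: abs_minus_commute)
      qed
    next
      fix v assume v: "v \<in> V"
      have "h v mod 3 = (f2 v - f1 v) mod 3" using hD v by (auto simp: Dset_def)
      note hv = this
      show "h' v mod 3 = (f2 v - f1' v) mod 3"
      proof (cases "v = w'")
        case True
        have "(f2 v - f1' v) mod 3 = (f2 v - (f1 v + s)) mod 3"
          using True by (simp add: f1'_def mod_diff_right_eq)
        also have "\<dots> = ((f2 v - f1 v) - s) mod 3" by (simp add: algebra_simps)
        also have "\<dots> = ((f2 v - f1 v) mod 3 - s) mod 3" by (simp add: mod_diff_left_eq)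
        also have "\<dots> = (h v mod 3 - s) mod 3" using hv by simp
        also have "\<dots> = (h v - s) mod 3" by (simp add: mod_diff_left_eq)
        finally show ?thesis using True by (simp add: h'_def)
      next
        case False then show ?thesis using hv by (simp add: h'_def f1'_def)
      qed
    qed
    have nrm: "norm1 V h = norm1 V h' + 1"
    proof -
      have "norm1 V h = \<bar>h w'\<bar> + (\<Sum>v\<in>V - {w'}. \<bar>h v\<bar>)"
        unfolding norm1_def using sum.remove[OF finV w'(1)] by simp
      moreover have "norm1 V h' = \<bar>h w' - s\<bar> + (\<Sum>v\<in>V - {w'}. \<bar>h v\<bar>)"
        unfolding norm1_def using sum.remove[OF finV w'(1), of "\<lambda>v. \<bar>h' v\<bar>"]
        by (simp add: h'_def)
      moreover have "\<bar>h w'\<bar> = \<bar>h w' - s\<bar> + 1" using sg s by (auto simp: sgn_if split: if_splits)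
      ultimately show ?thesis by simp
    qed
    then have "norm1 V h' = int n" using nh by simp
    then obtain cs' where "goodwalk V E f1' f2 h' cs'" using Suc.IH p1' hD' by blast
    then have "goodwalk V E f1 f2 h (f1 # cs')"
      using step_lemma[OF _ p1 w'(1) f1'_def h'_def s sg nrm] by blast
    then show "\<exists>cs. goodwalk V E f1 f2 h cs" by blast
  qed
qed

theorem mainTheorem5:
  fixes V :: "'a set" and E :: "('a \<times> 'a) set" and f1 f2 h :: "'a \<Rightarrow> int"
  assumes "is_tree V E"
    and "proper3 V E f1" and "proper3 V E f2"
    and "h \<in> Dset V E f1 f2"
  shows "\<exists>cs. col_walk V E cs \<and> hd cs = f1 \<and> last cs = f2
           \<and> int (length cs - 1) = norm1 V h
           \<and> (\<forall>w\<in>V.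
                card {i. Suc i < length cs \<and> (cs ! i) w \<noteq> (cs ! Suc i) w} = nat \<bar>h w\<bar>
              \<and> (\<forall>i. Suc i < length cs \<and> (cs ! i) w \<noteq> (cs ! Suc i) w
                     \<longrightarrow> (cs ! Suc i) w = ((cs ! i) w + sgn (h w)) mod 3))"
proof -
  have "norm1 V h \<ge> 0" by (simp add: norm1_def sum_nonneg)
  then have "norm1 V h = int (nat (norm1 V h))" by simp
  then obtain cs where "goodwalk V E f1 f2 h cs"
    using main_ind[OF assms(1,3), of "nat (norm1 V h)"] assms(2,4) by blast
  then show ?thesis unfolding goodwalk_def by blast
qed

end
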